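(* Let $e_1,e_2,e_3,f_1,f_2,f_3$ be a coframe on a 6-manifold with $de_1=-2e_2\wedge e_3$, $df_1=-2f_2\wedge f_3$ and cyclically. For a parameter $t$ put $c_k=\cos(t+2\pi(k-1)/3)$, $s_k=\sin(t+2\pi(k-1)/3)$, and for constants $\lambda\neq0$, $a$, $b$ define \[X_{2k-1}=\lambda f_k+\lambda(ac_k+b)e_k,\qquad X_{2k}=4s_ke_k\qquad(k=1,2,3),\] $\xi=X_{12}+X_{34}+X_{56}$ and $\Xi=(X_1+iX_2)\wedge(X_3+iX_4)\wedge(X_5+iX_6)$ (here $X_{ab}=X_a\wedge X_b$, and $d$ is the exterior derivative on the 6-manifold, $t$ held fixed). Then there is a constant $\mu$ such that $d(\mathrm{Re}\,\Xi)=\frac{\mu}{2}\,\xi\wedge\xi$ holds for all $t$ if and only if either (i) $(a,b)=(0,-1)$ or $(0,0)$, in which case $\mu=-2/\lambda$; or (ii) $(a,b)=(\pm2,1)$, in which case $\mu=-\frac{\lambda^2+4}{2\lambda}$.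
   Context: The condition $d(\mathrm{Re}\,\Xi)=\frac\mu2\xi\wedge\xi$ is the nearly-half-flat condition for the $SU(3)$-structure $(\xi,\Xi)$ on the 6-dimensional orbits. *)

theory Defs
  imports Complex_Main
begin

text \<open>Basis 1-forms are indexed by 0..5: e_1,e_2,e_3 are 0,1,2 and f_1,f_2,f_3 are 3,4,5.
  A form is given by its coefficient function on index sets I (the coefficient of
  the wedge of the basis 1-forms in I, taken in increasing order).\<close>

type_synonym 'a form = "nat set \<Rightarrow> 'a"

definition form_add :: "'a::comm_ring_1 form \<Rightarrow> 'a form \<Rightarrow> 'a form" where
  "form_add \<alpha> \<beta> = (\<lambda>I. \<alpha> I + \<beta> I)"

definition form_diff :: "'a::comm_ring_1 form \<Rightarrow> 'a form \<Rightarrow> 'a form" where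
  "form_diff \<alpha> \<beta> = (\<lambda>I. \<alpha> I - \<beta> I)"

definition form_scale :: "'a::comm_ring_1 \<Rightarrow> 'a form \<Rightarrow> 'a form" where
  "form_scale c \<alpha> = (\<lambda>I. c * \<alpha> I)"

definition form_zero :: "'a::comm_ring_1 form" where
  "form_zero = (\<lambda>I. 0)"

definition form_unit :: "'a::comm_ring_1 form" where
  "form_unit = (\<lambda>I. if I = {} then 1 else 0)"

definition basis1 :: "nat \<Rightarrow> 'a::comm_ring_1 form" where
  "basis1 i = (\<lambda>I. if I = {i} then 1 else 0)"

text \<open>Sign of merging the increasing sequences I and J: number of inversions.\<close>
definition inv_count :: "nat set \<Rightarrow> nat set \<Rightarrow> nat" where
  "inv_count I J = card {(i, j). i \<in> I \<and> j \<in> J \<and> j < i}"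

definition wedge :: "'a::comm_ring_1 form \<Rightarrow> 'a form \<Rightarrow> 'a form" where
  "wedge \<alpha> \<beta> = (\<lambda>K. if finite K
      then (\<Sum>I\<in>Pow K. (-1) ^ inv_count I (K - I) * \<alpha> I * \<beta> (K - I))
      else 0)"

definition dgen :: "nat \<Rightarrow> 'a::comm_ring_1 form" where
  "dgen i = (if i = 0 then form_scale (-2) (wedge (basis1 1) (basis1 2))
        else if i = 1 then form_scale (-2) (wedge (basis1 2) (basis1 0))
        else if i = 2 then form_scale (-2) (wedge (basis1 0) (basis1 1))
        else if i = 3 then form_scale (-2) (wedge (basis1 4) (basis1 5))
        else if i = 4 then form_scale (-2) (wedge (basis1 5) (basis1 3))
        else if i = 5 then form_scale (-2) (wedge (basis1 3) (basis1 4))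
        else form_zero)"

fun mono :: "nat list \<Rightarrow> 'a::comm_ring_1 form" where
  "mono [] = form_unit"
| "mono (i # is) = wedge (basis1 i) (mono is)"

text \<open>Exterior derivative of a wedge of basis 1-forms (Leibniz rule).\<close>
fun dmono :: "nat list \<Rightarrow> 'a::comm_ring_1 form" where
  "dmono [] = form_zero"
| "dmono (i # is) = form_diff (wedge (dgen i) (mono is)) (wedge (basis1 i) (dmono is))"

definition ext_d :: "'a::comm_ring_1 form \<Rightarrow> 'a form" where
  "ext_d \<alpha> = (\<lambda>K. \<Sum>I\<in>Pow {0..<6}. \<alpha> I * dmono (sorted_list_of_set I) K)"

definition e_k :: "nat \<Rightarrow> 'a::comm_ring_1 form" where
  "e_k k = basis1 (k - 1)"

definition f_k :: "nat \<Rightarrow> 'a::comm_ring_1 form" where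
  "f_k k = basis1 (k + 2)"

definition ck :: "real \<Rightarrow> nat \<Rightarrow> real" where
  "ck t k = cos (t + 2 * pi * (real k - 1) / 3)"

definition sk :: "real \<Rightarrow> nat \<Rightarrow> real" where
  "sk t k = sin (t + 2 * pi * (real k - 1) / 3)"

definition X_odd :: "real \<Rightarrow> real \<Rightarrow> real \<Rightarrow> real \<Rightarrow> nat \<Rightarrow> real form" where
  "X_odd lam a b t k = form_add (form_scale lam (f_k k))
                                (form_scale (lam * (a * ck t k + b)) (e_k k))"

definition X_even :: "real \<Rightarrow> nat \<Rightarrow> real form" where
  "X_even t k = form_scale (4 * sk t k) (e_k k)"

definition xi :: "real \<Rightarrow> real \<Rightarrow> real \<Rightarrow> real \<Rightarrow> real form" where
  "xi lam a b t = form_add (wedge (X_odd lam a b t 1) (X_even t 1))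
                   (form_add (wedge (X_odd lam a b t 2) (X_even t 2))
                             (wedge (X_odd lam a b t 3) (X_even t 3)))"

definition complexify :: "real form \<Rightarrow> complex form" where
  "complexify \<alpha> = (\<lambda>I. complex_of_real (\<alpha> I))"

definition Zk :: "real \<Rightarrow> real \<Rightarrow> real \<Rightarrow> real \<Rightarrow> nat \<Rightarrow> complex form" where
  "Zk lam a b t k = form_add (complexify (X_odd lam a b t k))
                             (form_scale \<i> (complexify (X_even t k)))"

definition Xi :: "real \<Rightarrow> real \<Rightarrow> real \<Rightarrow> real \<Rightarrow> complex form" where
  "Xi lam a b t = wedge (Zk lam a b t 1) (wedge (Zk lam a b t 2) (Zk lam a b t 3))"

definition Re_form :: "complex form \<Rightarrow> real form" where
  "Re_form \<alpha> = (\<lambda>I. Re (\<alpha> I))"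

end

theory Submission
  imports Defs
begin


definition sf :: "(nat list \<times> 'a::comm_ring_1) list \<Rightarrow> 'a form" where
  "sf L = (\<lambda>K. sum_list (map (\<lambda>(xs,c). if set xs = K then c else 0) L))"

definition sgnl :: "nat list \<Rightarrow> nat list \<Rightarrow> 'a::comm_ring_1" where
  "sgnl xs ys = (-1) ^ length (filter (\<lambda>(i,j). j < i) (List.product xs ys))"

definition wl1 :: "nat list \<Rightarrow> 'a::comm_ring_1 \<Rightarrow> nat list \<Rightarrow> 'a \<Rightarrow> (nat list \<times> 'a) list" where
  "wl1 xs c ys d = (if set xs \<inter> set ys = {} then [(sort (xs @ ys), sgnl xs ys * c * d)] else [])"

definition wl :: "(nat list \<times> 'a::comm_ring_1) list \<Rightarrow> (nat list \<times> 'a) list \<Rightarrow> (nat list \<times> 'a) list" where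
  "wl L1 L2 = concat (map (\<lambda>(xs,c). concat (map (\<lambda>(ys,d). wl1 xs c ys d) L2)) L1)"

lemma inv_count_list:
  assumes "distinct xs" "distinct ys"
  shows "inv_count (set xs) (set ys) = length (filter (\<lambda>(i,j). j < i) (List.product xs ys))"
proof -
  have "{(i, j). i \<in> set xs \<and> j \<in> set ys \<and> j < i} = set (filter (\<lambda>(i,j). j < i) (List.product xs ys))"
    by auto
  moreover have "distinct (filter (\<lambda>(i,j). j < i) (List.product xs ys))"
    using assms by (simp add: distinct_product)
  ultimately show ?thesis unfolding inv_count_def by (metis distinct_card)
qed

lemma sf_append: "sf (A @ B) = (\<lambda>K. sf A K + sf B K)"
  by (auto simp: sf_def)

lemma sf_Cons: "sf (p # B) = (\<lambda>K. sf [p] K + sf B K)"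
  using sf_append[of "[p]" B] by simp

lemma sf_Nil: "sf [] = (\<lambda>K. 0)" by (simp add: sf_def)

lemma wedge_add_left: "wedge (\<lambda>K. \<alpha> K + \<beta> K) \<gamma> = (\<lambda>K. wedge \<alpha> \<gamma> K + wedge \<beta> \<gamma> K)"
  by (simp add: wedge_def fun_eq_iff distrib_left distrib_right sum.distrib)

lemma wedge_add_right: "wedge \<gamma> (\<lambda>K. \<alpha> K + \<beta> K) = (\<lambda>K. wedge \<gamma> \<alpha> K + wedge \<gamma> \<beta> K)"
  by (simp add: wedge_def fun_eq_iff distrib_left distrib_right sum.distrib)

lemma wedge_zero_left: "wedge (\<lambda>K. 0) \<gamma> = (\<lambda>K. 0)"
  by (auto simp: wedge_def)
lemma wedge_zero_right: "wedge \<gamma> (\<lambda>K. 0) = (\<lambda>K. 0)"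
  by (auto simp: wedge_def)

lemma wedge_single:
  assumes "distinct xs" "distinct ys"
  shows "wedge (sf [(xs,c)]) (sf [(ys,d)]) = sf (wl1 xs c ys d)"
proof
  fix K
  show "wedge (sf [(xs,c)]) (sf [(ys,d)]) K = sf (wl1 xs c ys d) K"
  proof (cases "finite K")
    case False
    then show ?thesis
      by (auto simp: wedge_def sf_def wl1_def)
  next
    case True
    have "wedge (sf [(xs,c)]) (sf [(ys,d)]) K =
      (\<Sum>I\<in>Pow K. (-1) ^ inv_count I (K - I) * (if set xs = I then c else 0) * (if set ys = K - I then d else 0))"
      using True by (simp add: wedge_def sf_def)
    also have "\<dots> =
      (\<Sum>I\<in>Pow K. if I = set xs then (-1) ^ inv_count I (K - I) * c * (if set ys = K - I then d else 0) else 0)"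
      by (rule sum.cong) auto
    also have "\<dots> = (if set xs \<subseteq> K then (-1) ^ inv_count (set xs) (K - set xs) * c * (if set ys = K - set xs then d else 0) else 0)"
      using True by (simp add: sum.delta')
    also have "\<dots> = sf (wl1 xs c ys d) K"
    proof (cases "set xs \<inter> set ys = {} \<and> K = set xs \<union> set ys")
      case True
      then have 1: "K - set xs = set ys" "set xs \<subseteq> K" by auto
      have 2: "set (sort (xs @ ys)) = K" using True by simp
      have "sf (wl1 xs c ys d) K = sgnl xs ys * c * d"
        using True 2 by (simp add: sf_def wl1_def)
      then show ?thesis using 1 assms
        by (simp add: sgnl_def inv_count_list)
    next
      case False
      have "sf (wl1 xs c ys d) K = 0"
      proof (cases "set xs \<inter> set ys = {}")
        case True
        then have "set (sort (xs @ ys)) \<noteq> K" using False by simp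
        then show ?thesis using True by (simp add: sf_def wl1_def)
      qed (simp add: sf_def wl1_def)
      moreover have "\<not> (set xs \<subseteq> K \<and> set ys = K - set xs)" using False by blast
      ultimately show ?thesis by auto
    qed
    finally show ?thesis .
  qed
qed

definition kd :: "(nat list \<times> 'a) list \<Rightarrow> bool" where
  "kd L = (\<forall>p\<in>set L. distinct (fst p))"

lemma kd_simps: "kd []" "kd (p # L) = (distinct (fst p) \<and> kd L)"
  by (auto simp: kd_def)

lemma wedge_sf_single:
  assumes "distinct xs" "kd L2"
  shows "wedge (sf [(xs,c)]) (sf L2) = sf (concat (map (\<lambda>(ys,d). wl1 xs c ys d) L2))"
  using assms
proof (induction L2)
  case Nil
  then show ?case by (simp add: sf_Nil wedge_zero_right)
next
  case (Cons p L2)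
  obtain ys d where p: "p = (ys,d)" by force
  show ?case
    using Cons p
    by (subst sf_Cons) (simp add: wedge_add_right wedge_single kd_simps sf_append)
qed

lemma wedge_sf:
  assumes "kd L1" "kd L2"
  shows "wedge (sf L1) (sf L2) = sf (wl L1 L2)"
  using assms
proof (induction L1)
  case Nil
  then show ?case by (simp add: sf_Nil wedge_zero_left wl_def)
next
  case (Cons p L1)
  obtain xs c where p: "p = (xs,c)" by force
  show ?case
    using Cons p
    by (subst sf_Cons) (simp add: wedge_add_left wedge_sf_single kd_simps sf_append wl_def)
qed

lemma basis1_sf: "basis1 i = sf [([i],1)]"
  by (auto simp: basis1_def sf_def)
lemma form_unit_sf: "form_unit = sf [([],1)]"
  by (auto simp: form_unit_def sf_def)
lemma form_zero_sf: "form_zero = sf []"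
  by (auto simp: form_zero_def sf_def)
lemma form_add_sf: "form_add (sf A) (sf B) = sf (A @ B)"
  by (simp add: form_add_def sf_append)

lemma form_scale_sf: "form_scale c (sf L) = sf (map (\<lambda>(xs,d). (xs, c * d)) L)"
proof (induction L)
  case Nil then show ?case by (simp add: form_scale_def sf_def)
next
  case (Cons p L) then show ?case
    by (cases p) (simp add: form_scale_def sf_def fun_eq_iff distrib_left)
qed

lemma form_diff_sf: "form_diff (sf A) (sf B) = sf (A @ map (\<lambda>(xs,d). (xs, - d)) B)"
proof -
  have "sf (map (\<lambda>(xs,d). (xs, - d)) B) = form_scale (-1) (sf B)"
    by (simp add: form_scale_sf)
  then show ?thesis
    by (simp add: form_diff_def sf_append form_scale_def fun_eq_iff)
qed

lemma complexify_sf: "complexify (sf L) = sf (map (\<lambda>(xs,d). (xs, complex_of_real d)) L)"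
proof (induction L)
  case Nil then show ?case by (simp add: complexify_def sf_def)
next
  case (Cons p L) then show ?case
    by (cases p) (auto simp: complexify_def sf_def fun_eq_iff)
qed

lemma Re_form_sf: "Re_form (sf L) = sf (map (\<lambda>(xs,d). (xs, Re d)) L)"
proof (induction L)
  case Nil then show ?case by (simp add: Re_form_def sf_def)
next
  case (Cons p L) then show ?case
    by (cases p) (auto simp: Re_form_def sf_def fun_eq_iff)
qed

lemma ext_d_Nil: "ext_d (sf []) = sf []"
  by (simp add: ext_d_def sf_def)

lemma ext_d_Cons:
  assumes "sorted xs" "distinct xs" "set xs \<subseteq> {0..<6}"
  shows "ext_d (sf ((xs,c) # L)) = form_add (form_scale c (dmono xs)) (ext_d (sf L))"
proof
  fix K
  have eq: "\<And>I. sf ((xs,c)#L) I = (if set xs = I then c else 0) + sf L I" by (simp add: sf_def)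
  have "ext_d (sf ((xs,c) # L)) K =
     (\<Sum>I\<in>Pow {0..<6}. (if set xs = I then c else 0) * dmono (sorted_list_of_set I) K) + ext_d (sf L) K"
    by (simp only: ext_d_def eq distrib_right sum.distrib)
  also have "(\<Sum>I\<in>Pow {0..<6}. (if set xs = I then c else 0) * dmono (sorted_list_of_set I) K)
     = (\<Sum>I\<in>Pow {0..<6}. if set xs = I then c * dmono (sorted_list_of_set I) K else 0)"
    by (rule sum.cong) auto
  also have "\<dots> = c * dmono (sorted_list_of_set (set xs)) K"
    using assms(3) by (simp add: sum.delta)
  also have "sorted_list_of_set (set xs) = xs"
    using assms by (simp add: sorted_list_of_set.idem_if_sorted_distinct)
  finally show "ext_d (sf ((xs,c) # L)) K = form_add (form_scale c (dmono xs)) (ext_d (sf L)) K"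
    by (simp add: form_add_def form_scale_def)
qed

definition coefl :: "(nat list \<times> 'a::comm_ring_1) list \<Rightarrow> nat list \<Rightarrow> 'a" where
  "coefl L ks = sum_list (map (\<lambda>(xs,c). if xs = ks then c else 0) L)"

definition ks :: "(nat list \<times> 'a) list \<Rightarrow> bool" where
  "ks L = (\<forall>p\<in>set L. sorted (fst p) \<and> distinct (fst p))"

lemma ks_simps: "ks []" "ks (p # L) = (sorted (fst p) \<and> distinct (fst p) \<and> ks L)"
  by (auto simp: ks_def)

lemma sf_at_key:
  assumes "ks L" "sorted k" "distinct k"
  shows "sf L (set k) = coefl L k"
  using assms
proof (induction L)
  case Nil then show ?case by (simp add: sf_def coefl_def)
next
  case (Cons p L)
  then show ?case
    by (cases p) (auto simp: sf_def coefl_def ks_simps sorted_distinct_set_unique)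
qed

lemma sf_off_key:
  assumes "\<forall>p\<in>set L. set (fst p) \<noteq> K"
  shows "sf L K = 0"
  using assms by (induction L) (simp_all add: sf_def split_def)

lemma ks_key:
  assumes "ks L" "k \<in> set (map fst L)"
  shows "sorted k \<and> distinct k"
  using assms unfolding ks_def by auto

lemma sf_eq_iff:
  assumes "ks L1" "ks L2"
  shows "(sf L1 = sf L2) = (\<forall>k\<in>set (map fst L1 @ map fst L2). coefl L1 k = coefl L2 k)"
proof
  assume E: "sf L1 = sf L2"
  show "\<forall>k\<in>set (map fst L1 @ map fst L2). coefl L1 k = coefl L2 k"
  proof
    fix k assume k: "k\<in>set (map fst L1 @ map fst L2)"
    then have sd: "sorted k \<and> distinct k" using ks_key[OF assms(1)] ks_key[OF assms(2)] by auto
    have "coefl L1 k = sf L1 (set k)" using sf_at_key[OF assms(1)] sd by simp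
    also have "\<dots> = sf L2 (set k)" using E by simp
    also have "\<dots> = coefl L2 k" using sf_at_key[OF assms(2)] sd by simp
    finally show "coefl L1 k = coefl L2 k" .
  qed
next
  assume H: "\<forall>k\<in>set (map fst L1 @ map fst L2). coefl L1 k = coefl L2 k"
  show "sf L1 = sf L2"
  proof
    fix K
    show "sf L1 K = sf L2 K"
    proof (cases "\<exists>k\<in>set (map fst L1 @ map fst L2). set k = K")
      case True
      then obtain k where k: "k\<in>set (map fst L1 @ map fst L2)" "set k = K" by blast
      then have sd: "sorted k \<and> distinct k" using ks_key[OF assms(1)] ks_key[OF assms(2)] by auto
      have "sf L1 K = coefl L1 k" using sf_at_key[OF assms(1), of k] sd k(2) by simp
      also have "\<dots> = coefl L2 k" using H k(1) by blast
      also have "\<dots> = sf L2 K" using sf_at_key[OF assms(2), of k] sd k(2) by simp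
      finally show ?thesis .
    next
      case False
      have 1: "sf L1 K = 0" by (rule sf_off_key) (use False in auto)
      have 2: "sf L2 K = 0" by (rule sf_off_key) (use False in auto)
      show ?thesis using 1 2 by simp
    qed
  qed
qed




lemma disj_list: "(set xs \<inter> set ys = {}) = (\<forall>x\<in>set xs. x \<notin> set ys)" by auto

lemmas comp_simps = Xi_def Zk_def X_odd_def X_even_def e_k_def f_k_def xi_def basis1_sf form_add_sf
  form_scale_sf complexify_sf Re_form_sf wedge_sf kd_simps wl_def wl1_def sgnl_def form_diff_sf
  form_unit_sf form_zero_sf dgen_def ext_d_Cons ext_d_Nil disj_list

definition EQ :: "real \<Rightarrow> real \<Rightarrow> real \<Rightarrow> real \<Rightarrow> real \<Rightarrow> real \<Rightarrow> real \<Rightarrow> real \<Rightarrow> real \<Rightarrow> bool" where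
  "EQ lam a b \<mu> ci cj cm si sj = (32*lam*(si*sj) - 2*lam^3*((a*ci+b)*(a*cj+b)) - 2*lam^3*(a*cm+b) = -16*\<mu>*lam^2*(si*sj))"

lemma eq_iff:
  "(ext_d (Re_form (Xi lam a b t)) = form_scale (\<mu> / 2) (wedge (xi lam a b t) (xi lam a b t))) \<longleftrightarrow>
    EQ lam a b \<mu> (ck t 1) (ck t 2) (ck t 3) (sk t 1) (sk t 2) \<and>
    EQ lam a b \<mu> (ck t 1) (ck t 3) (ck t 2) (sk t 1) (sk t 3) \<and>
    EQ lam a b \<mu> (ck t 2) (ck t 3) (ck t 1) (sk t 2) (sk t 3)"
  apply (simp add: comp_simps sf_eq_iff ks_simps coefl_def)
  apply (simp add: EQ_def power3_eq_cube power2_eq_square)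
  apply (simp add: algebra_simps)
  by blast

definition Q :: "real \<Rightarrow> real \<Rightarrow> real \<Rightarrow> real \<Rightarrow> real \<Rightarrow> bool" where
  "Q lam a b \<mu> x = (32*lam*(1/4 - x^2) - 2*lam^3*(a^2*(x^2-3/4) - a*b*x + b^2) - 2*lam^3*(a*x+b)
      = -16*\<mu>*lam^2*(1/4 - x^2))"

lemma EQ_Q:
  assumes "ci+cj = -cm" "ci*cj = cm^2-3/4" "si*sj = 1/4-cm^2"
  shows "EQ lam a b \<mu> ci cj cm si sj = Q lam a b \<mu> cm"
proof -
  have "(a*ci+b)*(a*cj+b) = a^2*(ci*cj) + a*b*(ci+cj) + b^2"
    by (simp add: algebra_simps power2_eq_square)
  also have "\<dots> = a^2*(cm^2-3/4) - a*b*cm + b^2" using assms by simp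
  finally have e: "(a*ci+b)*(a*cj+b) = a^2*(cm^2-3/4) - a*b*cm + b^2" .
  show ?thesis unfolding EQ_def Q_def e assms(3) ..
qed

lemma ck1: "ck t 1 = cos t" and sk1: "sk t 1 = sin t"
  by (simp_all add: ck_def sk_def)

lemma ck2: "ck t 2 = -(cos t)/2 - sqrt 3/2 * sin t" and sk2: "sk t 2 = -(sin t)/2 + sqrt 3/2 * cos t"
proof -
  have h: "2 * pi * (real 2 - 1) / 3 = 2*pi/3" by simp
  show "ck t 2 = -(cos t)/2 - sqrt 3/2 * sin t"
    unfolding ck_def h cos_add cos_120 sin_120 by simp
  show "sk t 2 = -(sin t)/2 + sqrt 3/2 * cos t"
    unfolding sk_def h sin_add cos_120 sin_120 by simp
qed

lemma ck3: "ck t 3 = -(cos t)/2 + sqrt 3/2 * sin t" and sk3: "sk t 3 = -(sin t)/2 - sqrt 3/2 * cos t"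
proof -
  have h: "2 * pi * (real 3 - 1) / 3 = pi + pi/3" by simp
  have c: "cos (pi + pi/3) = -1/2" unfolding cos_add by (simp add: cos_60)
  have s: "sin (pi + pi/3) = - (sqrt 3/2)" unfolding sin_add by (simp add: sin_60)
  show "ck t 3 = -(cos t)/2 + sqrt 3/2 * sin t"
    unfolding ck_def h cos_add c s by (simp add: cos_60 sin_60)
  show "sk t 3 = -(sin t)/2 - sqrt 3/2 * cos t"
    unfolding sk_def h sin_add c s by (simp add: cos_60 sin_60)
qed

lemma poly_ids:
  fixes C S r :: real
  assumes r: "r*r=3" and p: "S*S+C*C=1"
  shows "C * (-C/2 - r/2*S) = (-C/2 + r/2*S)^2 - 3/4"
    "C * (-C/2 + r/2*S) = (-C/2 - r/2*S)^2 - 3/4"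
    "(-C/2 - r/2*S) * (-C/2 + r/2*S) = C^2 - 3/4"
    "S * (-S/2 + r/2*C) = 1/4 - (-C/2 + r/2*S)^2"
    "S * (-S/2 - r/2*C) = 1/4 - (-C/2 - r/2*S)^2"
    "(-S/2 + r/2*C) * (-S/2 - r/2*C) = 1/4 - C^2"
proof -
  have cb: "X = Y" if "X - Y = al*(S*S+C*C-1) + be*(r*r-3)" for X Y al be :: real
    using that r p by simp
  show "C * (-C/2 - r/2*S) = (-C/2 + r/2*S)^2 - 3/4"
    by (rule cb[where al="-3/4" and be="-(S*S)/4"]) (simp add: field_simps power2_eq_square)
  show "C * (-C/2 + r/2*S) = (-C/2 - r/2*S)^2 - 3/4"
    by (rule cb[where al="-3/4" and be="-(S*S)/4"]) (simp add: field_simps power2_eq_square)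
  show "(-C/2 - r/2*S) * (-C/2 + r/2*S) = C^2 - 3/4"
    by (rule cb[where al="-3/4" and be="-(S*S)/4"]) (simp add: field_simps power2_eq_square)
  show "S * (-S/2 + r/2*C) = 1/4 - (-C/2 + r/2*S)^2"
    by (rule cb[where al="1/4" and be="(S*S)/4"]) (simp add: field_simps power2_eq_square)
  show "S * (-S/2 - r/2*C) = 1/4 - (-C/2 - r/2*S)^2"
    by (rule cb[where al="1/4" and be="(S*S)/4"]) (simp add: field_simps power2_eq_square)
  show "(-S/2 + r/2*C) * (-S/2 - r/2*C) = 1/4 - C^2"
    by (rule cb[where al="1/4" and be="-(C*C)/4"]) (simp add: field_simps power2_eq_square)
qed

lemma trig_ids:
  "ck t 1 + ck t 2 = - ck t 3" "ck t 1 * ck t 2 = (ck t 3)^2 - 3/4" "sk t 1 * sk t 2 = 1/4 - (ck t 3)^2"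
  "ck t 1 + ck t 3 = - ck t 2" "ck t 1 * ck t 3 = (ck t 2)^2 - 3/4" "sk t 1 * sk t 3 = 1/4 - (ck t 2)^2"
  "ck t 2 + ck t 3 = - ck t 1" "ck t 2 * ck t 3 = (ck t 1)^2 - 3/4" "sk t 2 * sk t 3 = 1/4 - (ck t 1)^2"
proof -
  have r: "sqrt 3 * sqrt 3 = (3::real)" by simp
  have p: "sin t * sin t + cos t * cos t = 1" using sin_cos_squared_add[of t] by (simp add: power2_eq_square)
  note pi = poly_ids[OF r p]
  show "ck t 1 + ck t 2 = - ck t 3" unfolding ck1 ck2 ck3 by simp
  show "ck t 1 + ck t 3 = - ck t 2" unfolding ck1 ck2 ck3 by simp
  show "ck t 2 + ck t 3 = - ck t 1" unfolding ck1 ck2 ck3 by simp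
  show "ck t 1 * ck t 2 = (ck t 3)^2 - 3/4" unfolding ck1 ck2 ck3 by (rule pi(1))
  show "ck t 1 * ck t 3 = (ck t 2)^2 - 3/4" unfolding ck1 ck2 ck3 by (rule pi(2))
  show "ck t 2 * ck t 3 = (ck t 1)^2 - 3/4" unfolding ck1 ck2 ck3 by (rule pi(3))
  show "sk t 1 * sk t 2 = 1/4 - (ck t 3)^2" unfolding sk1 sk2 sk3 ck3 by (rule pi(4))
  show "sk t 1 * sk t 3 = 1/4 - (ck t 2)^2" unfolding sk1 sk2 sk3 ck2 by (rule pi(5))
  show "sk t 2 * sk t 3 = 1/4 - (ck t 1)^2" unfolding sk1 sk2 sk3 ck1 by (rule pi(6))
qed

lemma eq_iff_Q:
  "(ext_d (Re_form (Xi lam a b t)) = form_scale (\<mu> / 2) (wedge (xi lam a b t) (xi lam a b t))) \<longleftrightarrow>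
    Q lam a b \<mu> (ck t 3) \<and> Q lam a b \<mu> (ck t 2) \<and> Q lam a b \<mu> (ck t 1)"
proof -
  have e1: "EQ lam a b \<mu> (ck t 1) (ck t 2) (ck t 3) (sk t 1) (sk t 2) = Q lam a b \<mu> (ck t 3)"
    by (rule EQ_Q) (rule trig_ids)+
  have e2: "EQ lam a b \<mu> (ck t 1) (ck t 3) (ck t 2) (sk t 1) (sk t 3) = Q lam a b \<mu> (ck t 2)"
    by (rule EQ_Q) (rule trig_ids)+
  have e3: "EQ lam a b \<mu> (ck t 2) (ck t 3) (ck t 1) (sk t 2) (sk t 3) = Q lam a b \<mu> (ck t 1)"
    by (rule EQ_Q) (rule trig_ids)+
  show ?thesis unfolding eq_iff e1 e2 e3 ..
qed

lemma ck3_vals: "ck (2*pi/3) 3 = 1" "ck (-pi/3) 3 = -1" "ck (pi/6) 3 = 0"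
proof -
  have "2*pi/3 + 2 * pi * (real 3 - 1) / 3 = 2*pi" by simp
  then show "ck (2*pi/3) 3 = 1" unfolding ck_def by (metis cos_two_pi)
  have "-pi/3 + 2 * pi * (real 3 - 1) / 3 = pi" by simp
  then show "ck (-pi/3) 3 = -1" unfolding ck_def by (metis cos_pi)
  have "pi/6 + 2 * pi * (real 3 - 1) / 3 = 3/2*pi" by simp
  then show "ck (pi/6) 3 = 0" unfolding ck_def by (metis cos_3over2_pi)
qed

lemma main_iff:
  assumes l: "lam \<noteq> 0"
  shows "(\<forall>t. ext_d (Re_form (Xi lam a b t)) = form_scale (\<mu> / 2) (wedge (xi lam a b t) (xi lam a b t)))
    \<longleftrightarrow> ((a = 0 \<and> (b = -1 \<or> b = 0) \<and> \<mu> = -2 / lam)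
            \<or> ((a = 2 \<or> a = -2) \<and> b = 1 \<and> \<mu> = -(lam^2 + 4) / (2 * lam)))"
proof
  assume H: "\<forall>t. ext_d (Re_form (Xi lam a b t)) = form_scale (\<mu> / 2) (wedge (xi lam a b t) (xi lam a b t))"
  have q1: "Q lam a b \<mu> 1" using H[rule_format, of "2*pi/3"] eq_iff_Q ck3_vals(1) by metis
  have qm: "Q lam a b \<mu> (-1)" using H[rule_format, of "-pi/3"] eq_iff_Q ck3_vals(2) by metis
  have q0: "Q lam a b \<mu> 0" using H[rule_format, of "pi/6"] eq_iff_Q ck3_vals(3) by metis
  define F where "F x = 32*lam*(1/4 - x^2) - 2*lam^3*(a^2*(x^2-3/4) - a*b*x + b^2) - 2*lam^3*(a*x+b) + 16*\<mu>*lam^2*(1/4 - x^2)" for x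
  have QF: "Q lam a b \<mu> x \<longleftrightarrow> F x = 0" for x unfolding Q_def F_def by linarith
  have F1: "F 1 = 0" and Fm: "F (-1) = 0" and F0: "F 0 = 0" using q1 qm q0 QF by auto
  have "lam^3 * (a*(1-b)) = -(F 1 - F (-1))/4"
    unfolding F_def by (simp add: field_simps power2_eq_square power3_eq_cube)
  then have "lam^3 * (a*(1-b)) = 0" using F1 Fm by simp
  then have A: "a*(1-b) = 0" using l by simp
  have "lam^3*(2*(b^2+b) - a^2) = -(F 1 + 3 * F 0)/4 - lam^3*(a*(1-b))/2"
    unfolding F_def by (simp add: field_simps power2_eq_square power3_eq_cube)
  then have "lam^3*(2*(b^2+b) - a^2) = 0" using F1 F0 A by simp
  then have B: "2*(b^2+b) = a^2" using l by simp
  have "lam * (8*lam*\<mu> + lam^2*a^2 + 16) = 2 * F 0 + 2 * (lam^3*(2*(b^2+b) - a^2))"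
    unfolding F_def by (simp add: field_simps power2_eq_square power3_eq_cube)
  then have "lam * (8*lam*\<mu> + lam^2*a^2 + 16) = 0" using F0 B by simp
  then have C: "8*lam*\<mu> + lam^2*a^2 + 16 = 0" using l by simp
  show "(a = 0 \<and> (b = -1 \<or> b = 0) \<and> \<mu> = -2 / lam)
            \<or> ((a = 2 \<or> a = -2) \<and> b = 1 \<and> \<mu> = -(lam^2 + 4) / (2 * lam))"
  proof (cases "a = 0")
    case True
    then have "b*(b+1) = 0" using B by (simp add: algebra_simps power2_eq_square)
    then have "b = -1 \<or> b = 0" by (auto simp: add_eq_0_iff)
    moreover have "\<mu> = -2/lam" using C True l by (simp add: field_simps)
    ultimately show ?thesis using True by simp
  next
    case False
    then have b: "b = 1" using A by simp
    then have "(a-2)*(a+2) = 0" using B by (simp add: algebra_simps power2_eq_square)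
    then have "a = 2 \<or> a = -2" by auto
    moreover have "\<mu> = -(lam^2 + 4) / (2 * lam)" using C b \<open>a = 2 \<or> a = -2\<close> l
      by (auto simp: field_simps power2_eq_square)
    ultimately show ?thesis using b by simp
  qed
next
  assume "(a = 0 \<and> (b = -1 \<or> b = 0) \<and> \<mu> = -2 / lam)
            \<or> ((a = 2 \<or> a = -2) \<and> b = 1 \<and> \<mu> = -(lam^2 + 4) / (2 * lam))"
  then consider (c1) "a = 0" "b = -1 \<or> b = 0" "\<mu> = -2 / lam"
    | (c2) "a = 2 \<or> a = -2" "b = 1" "\<mu> = -(lam^2 + 4) / (2 * lam)" by blast
  then have "\<forall>x. Q lam a b \<mu> x"
  proof (cases; intro allI)
    fix x assume h: "a = 0" "b = -1 \<or> b = 0" "\<mu> = -2 / lam"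
    have bb: "b^2 + b = 0" using h(2) by (auto simp: power2_eq_square)
    have "Q lam 0 b (-2/lam) x"
      using h(2) l by (elim disjE) (simp_all add: Q_def field_simps power2_eq_square power3_eq_cube)
    then show "Q lam a b \<mu> x" using h by simp
  next
    fix x assume h: "a = 2 \<or> a = -2" "b = 1" "\<mu> = -(lam^2 + 4) / (2 * lam)"
    have aa: "a^2 = 4" using h(1) by (auto simp: power2_eq_square)
    have "32*lam*(1/4 - x^2) - 2*lam^3*(a^2*(x^2-3/4) - a*1*x + 1^2) - 2*lam^3*(a*x+1)
      = 32*lam*(1/4 - x^2) - 2*lam^3*(4*(x^2-3/4) + 1) - 2*lam^3" by (simp add: aa algebra_simps)
    also have "\<dots> = -16*(-(lam^2 + 4) / (2 * lam))*lam^2*(1/4 - x^2)"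
      using l by (simp add: field_simps power2_eq_square power3_eq_cube)
    finally show "Q lam a b \<mu> x" unfolding Q_def h(2) h(3) .
  qed
  then show "\<forall>t. ext_d (Re_form (Xi lam a b t)) = form_scale (\<mu> / 2) (wedge (xi lam a b t) (xi lam a b t))"
    unfolding eq_iff_Q by blast
qed


theorem proposition5p1:
  fixes lam a b :: real
  assumes "lam \<noteq> 0"
  shows "((\<exists>\<mu>. \<forall>t. ext_d (Re_form (Xi lam a b t))
                  = form_scale (\<mu> / 2) (wedge (xi lam a b t) (xi lam a b t)))
          \<longleftrightarrow> ((a = 0 \<and> (b = -1 \<or> b = 0)) \<or> ((a = 2 \<or> a = -2) \<and> b = 1)))
       \<and> (\<forall>\<mu>. (\<forall>t. ext_d (Re_form (Xi lam a b t))
                  = form_scale (\<mu> / 2) (wedge (xi lam a b t) (xi lam a b t)))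
          \<longrightarrow> (a = 0 \<and> (b = -1 \<or> b = 0) \<and> \<mu> = -2 / lam)
            \<or> ((a = 2 \<or> a = -2) \<and> b = 1 \<and> \<mu> = -(lam^2 + 4) / (2 * lam)))"
proof -
  note mi = main_iff[OF assms, of a b]
  have P1: "(\<exists>\<mu>. \<forall>t. ext_d (Re_form (Xi lam a b t))
                  = form_scale (\<mu> / 2) (wedge (xi lam a b t) (xi lam a b t)))
          \<longleftrightarrow> ((a = 0 \<and> (b = -1 \<or> b = 0)) \<or> ((a = 2 \<or> a = -2) \<and> b = 1))"
  proof
    assume "\<exists>\<mu>. \<forall>t. ext_d (Re_form (Xi lam a b t))
                  = form_scale (\<mu> / 2) (wedge (xi lam a b t) (xi lam a b t))"
    then obtain \<mu> where "\<forall>t. ext_d (Re_form (Xi lam a b t))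
                  = form_scale (\<mu> / 2) (wedge (xi lam a b t) (xi lam a b t))" by blast
    then show "(a = 0 \<and> (b = -1 \<or> b = 0)) \<or> ((a = 2 \<or> a = -2) \<and> b = 1)"
      using mi[of \<mu>] by blast
  next
    assume c: "(a = 0 \<and> (b = -1 \<or> b = 0)) \<or> ((a = 2 \<or> a = -2) \<and> b = 1)"
    show "\<exists>\<mu>. \<forall>t. ext_d (Re_form (Xi lam a b t))
                  = form_scale (\<mu> / 2) (wedge (xi lam a b t) (xi lam a b t))"
    proof (cases "a = 0 \<and> (b = -1 \<or> b = 0)")
      case True
      then show ?thesis using mi[of "-2 / lam"] by blast
    next
      case False
      then have "(a = 2 \<or> a = -2) \<and> b = 1" using c by blast
      then show ?thesis using mi[of "-(lam^2 + 4) / (2 * lam)"] by blast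
    qed
  qed
  show ?thesis using P1 mi by blast
qed

end
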